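(* Suppose each $D_{ij}$ is strictly increasing. Let $(\phi,x)$ with binary caching decisions $x_i(k)\in\{0,1\}$ be feasible for the joint routing and caching problem, and suppose it contains a routing loop with strictly positive flow, i.e. a sequence of nodes $(l_1,\dots,l_{m})$ with $l_1=l_m$ and an item $k$ such that $\phi_{l_pl_{p+1}}(k)>0$ for $p=1,\dots,m-1$ and $t_{l_1}(k)>0$. Then there exists a feasible $(\phi',x')$ with $T(\phi',x')<T(\phi,x)$, where $T=\sum_{(i,j)\in\mathcal E}D_{ij}(F_{ij})+\sum_iB_i(Y_i)$.
   Context: Network model. $\mathcal G=(\mathcal V,\mathcal E)$ is a finite directed graph with $(j,i)\in\mathcal E$ whenever $(i,j)\in\mathcal E$; $\mathcal N(i)=\{j:(i,j)\in\mathcal E\}$. $\mathcal C$ is a finite catalog; item $k$ has nonempty designated server set $\mathcal S_k\subseteq\mathcal V$. Exogenous request rates $r_i(k)\ge0$. Variables: $\phi_{ij}(k)\in[0,1]$ with $\phi_{ij}(k)=0$ if $(i,j)\notin\mathcal E$, and caching variables (here binary $x_i(k)$, generally $y_i(k)\in[0,1]$). Flow conservation: $x_i(k)+\sum_{j}\phi_{ij}(k)=1$ if $i\notin\mathcal S_k$ and $=0$ if $i\in\mathcal S_k$. A pair is feasible if it satisfies these constraints and the arrival rates $t_i(k)$, solving $t_i(k)=r_i(k)+\sum_j t_j(k)\phi_{ji}(k)$, are uniquely determined, nonnegative and finite. $f_{ji}(k)=t_i(k)\phi_{ij}(k)$, $F_{ij}=\sum_k f_{ij}(k)$, $Y_i=\sum_k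 x_i(k)$. $D_{ij},B_i$ are continuously differentiable, increasing, convex, zero at $0$. *)

theory Defs
  imports "HOL-Analysis.Analysis"
begin

text \<open>The graph is given by a
finite node set V and an edge set E (pairs). phi i j k is the routing variable,
x i k the caching variable, r i k the exogenous request rate, S k the server set.\<close>

definition network :: "'v set \<Rightarrow> ('v \<times> 'v) set \<Rightarrow> 'k set \<Rightarrow> ('k \<Rightarrow> 'v set)
    \<Rightarrow> ('v \<Rightarrow> 'k \<Rightarrow> real) \<Rightarrow> bool" where
  "network V E C S r \<longleftrightarrow>
     finite V \<and> E \<subseteq> V \<times> V \<and> (\<forall>i j. (i, j) \<in> E \<longrightarrow> (j, i) \<in> E) \<and>
     finite C \<and> (\<forall>k\<in>C. S k \<noteq> {} \<and> S k \<subseteq> V) \<and> (\<forall>i\<in>V. \<forall>k\<in>C. 0 \<le> r i k)"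

definition arrival_eq :: "'v set \<Rightarrow> ('v \<Rightarrow> 'k \<Rightarrow> real) \<Rightarrow> ('v \<Rightarrow> 'v \<Rightarrow> 'k \<Rightarrow> real)
    \<Rightarrow> 'k \<Rightarrow> ('v \<Rightarrow> real) \<Rightarrow> bool" where
  "arrival_eq V r phi k t \<longleftrightarrow>
     (\<forall>i. i \<notin> V \<longrightarrow> t i = 0) \<and>
     (\<forall>i\<in>V. t i = r i k + (\<Sum>j\<in>V. t j * phi j i k))"

definition arrival :: "'v set \<Rightarrow> ('v \<Rightarrow> 'k \<Rightarrow> real) \<Rightarrow> ('v \<Rightarrow> 'v \<Rightarrow> 'k \<Rightarrow> real)
    \<Rightarrow> 'v \<Rightarrow> 'k \<Rightarrow> real" where
  "arrival V r phi i k = (THE t. arrival_eq V r phi k t) i"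

text \<open>Feasibility of a (routing, caching) pair; caching variables in [0,1]
(the binary problem adds x_i(k) in {0,1} separately).\<close>
definition feasible :: "'v set \<Rightarrow> ('v \<times> 'v) set \<Rightarrow> 'k set \<Rightarrow> ('k \<Rightarrow> 'v set)
    \<Rightarrow> ('v \<Rightarrow> 'k \<Rightarrow> real) \<Rightarrow> ('v \<Rightarrow> 'v \<Rightarrow> 'k \<Rightarrow> real) \<Rightarrow> ('v \<Rightarrow> 'k \<Rightarrow> real) \<Rightarrow> bool" where
  "feasible V E C S r phi x \<longleftrightarrow>
     (\<forall>k\<in>C. \<forall>i j. 0 \<le> phi i j k \<and> phi i j k \<le> 1) \<and>
     (\<forall>k\<in>C. \<forall>i j. (i, j) \<notin> E \<longrightarrow> phi i j k = 0) \<and>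
     (\<forall>k\<in>C. \<forall>i\<in>V. 0 \<le> x i k \<and> x i k \<le> 1) \<and>
     (\<forall>k\<in>C. \<forall>i\<in>V. x i k + (\<Sum>j\<in>V. phi i j k) = (if i \<in> S k then 0 else 1)) \<and>
     (\<forall>k\<in>C. \<exists>!t. arrival_eq V r phi k t) \<and>
     (\<forall>k\<in>C. \<forall>i\<in>V. 0 \<le> arrival V r phi i k)"

definition binary_caching :: "'v set \<Rightarrow> 'k set \<Rightarrow> ('v \<Rightarrow> 'k \<Rightarrow> real) \<Rightarrow> bool" where
  "binary_caching V C x \<longleftrightarrow> (\<forall>k\<in>C. \<forall>i\<in>V. x i k = 0 \<or> x i k = 1)"

text \<open>F_ij = sum_k f_ij(k), with f_ji(k) = t_i(k) phi_ij(k), i.e. f_ij(k) = t_j(k) phi_ji(k).\<close>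
definition link_flow :: "'v set \<Rightarrow> 'k set \<Rightarrow> ('v \<Rightarrow> 'k \<Rightarrow> real) \<Rightarrow> ('v \<Rightarrow> 'v \<Rightarrow> 'k \<Rightarrow> real)
    \<Rightarrow> 'v \<Rightarrow> 'v \<Rightarrow> real" where
  "link_flow V C r phi i j = (\<Sum>k\<in>C. arrival V r phi j k * phi j i k)"

definition cache_size :: "'k set \<Rightarrow> ('v \<Rightarrow> 'k \<Rightarrow> real) \<Rightarrow> 'v \<Rightarrow> real" where
  "cache_size C x i = (\<Sum>k\<in>C. x i k)"

definition total_cost :: "'v set \<Rightarrow> ('v \<times> 'v) set \<Rightarrow> 'k set \<Rightarrow> ('v \<Rightarrow> 'k \<Rightarrow> real)
    \<Rightarrow> ('v \<Rightarrow> 'v \<Rightarrow> real \<Rightarrow> real) \<Rightarrow> ('v \<Rightarrow> real \<Rightarrow> real)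
    \<Rightarrow> ('v \<Rightarrow> 'v \<Rightarrow> 'k \<Rightarrow> real) \<Rightarrow> ('v \<Rightarrow> 'k \<Rightarrow> real) \<Rightarrow> real" where
  "total_cost V E C r D B phi x =
     (\<Sum>(i, j)\<in>E. D i j (link_flow V C r phi i j)) + (\<Sum>i\<in>V. B i (cache_size C x i))"

definition cost_function :: "(real \<Rightarrow> real) \<Rightarrow> bool" where
  "cost_function f \<longleftrightarrow>
     f 0 = 0 \<and> mono_on {0..} f \<and> convex_on {0..} f \<and>
     (\<exists>f'. continuous_on {0..} f' \<and>
            (\<forall>z\<ge>0. (f has_real_derivative f' z) (at z within {0..})))"

end

theory Submission
  imports Defs
begin
lemma homog_transfer:
  fixes V L :: "'v set" and P P' :: "'v \<Rightarrow> 'v \<Rightarrow> real" and t r s :: "'v \<Rightarrow> real"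
  assumes finV: "finite V" and LV: "L \<subseteq> V"
  and P'nn: "\<forall>i j. 0 \<le> P' j i" and Pnn: "\<forall>i j. 0 \<le> P j i"
  and rs': "\<forall>j\<in>V. (\<Sum>i\<in>V. P' j i) \<le> 1"
  and same: "\<forall>j\<in>V-L. \<forall>i. P' j i = P j i"
  and rsL: "\<forall>j\<in>L. (\<Sum>i\<in>V. P j i) = 1"
  and supp: "\<forall>j\<in>L. \<forall>i. P j i > 0 \<longrightarrow> P' j i > 0"
  and uniq: "\<forall>u. (\<forall>i. i\<notin>V \<longrightarrow> u i = 0) \<and> (\<forall>i\<in>V. u i = (\<Sum>j\<in>V. u j * P j i)) \<longrightarrow> (\<forall>i. u i = 0)"
  and teq: "\<forall>i\<in>V. t i = r i + (\<Sum>j\<in>V. t j * P j i)"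
  and rnn: "\<forall>i\<in>V. 0 \<le> r i" and tnn: "\<forall>i\<in>V. 0 \<le> t i" and tpos: "\<forall>l\<in>L. 0 < t l"
  and s0: "\<forall>i. i\<notin>V \<longrightarrow> s i = 0" and seq: "\<forall>i\<in>V. s i = (\<Sum>j\<in>V. s j * P' j i)"
  shows "s i = 0"
proof -
  define v where "v i = \<bar>s i\<bar>" for i
  have vnn: "\<And>i. 0 \<le> v i" by (simp add: v_def)
  have v1: "v i \<le> (\<Sum>j\<in>V. v j * P' j i)" if i: "i \<in> V" for i
  proof -
    have "v i = \<bar>\<Sum>j\<in>V. s j * P' j i\<bar>" using seq i by (simp add: v_def)
    also have "\<dots> \<le> (\<Sum>j\<in>V. \<bar>s j * P' j i\<bar>)" by (rule sum_abs)
    also have "\<dots> = (\<Sum>j\<in>V. v j * P' j i)" using P'nn by (simp add: v_def abs_mult)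
    finally show ?thesis .
  qed
  have sw: "(\<Sum>i\<in>V. \<Sum>j\<in>V. v j * P' j i) = (\<Sum>j\<in>V. v j * (\<Sum>i\<in>V. P' j i))"
    by (subst sum.swap) (simp add: sum_distrib_left)
  have le2: "(\<Sum>j\<in>V. v j * (\<Sum>i\<in>V. P' j i)) \<le> (\<Sum>j\<in>V. v j)"
    by (rule sum_mono) (rule mult_left_le, use rs' vnn in auto)
  have A: "(\<Sum>i\<in>V. (\<Sum>j\<in>V. v j * P' j i) - v i) = (\<Sum>i\<in>V. \<Sum>j\<in>V. v j * P' j i) - (\<Sum>i\<in>V. v i)"
    by (simp add: sum_subtractf)
  have Anonneg: "\<And>i. i \<in> V \<Longrightarrow> 0 \<le> (\<Sum>j\<in>V. v j * P' j i) - v i" using v1 by simp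
  have "(\<Sum>i\<in>V. (\<Sum>j\<in>V. v j * P' j i) - v i) = 0"
    using A sw le2 sum_nonneg[of V "\<lambda>i. (\<Sum>j\<in>V. v j * P' j i) - v i", OF Anonneg] by linarith
  hence veq: "\<forall>i\<in>V. v i = (\<Sum>j\<in>V. v j * P' j i)"
    using sum_nonneg_eq_0_iff[OF finV Anonneg] by simp
  have tot: "(\<Sum>j\<in>V. v j - v j * (\<Sum>i\<in>V. P' j i)) = 0"
  proof -
    have "(\<Sum>i\<in>V. \<Sum>j\<in>V. v j * P' j i) = (\<Sum>i\<in>V. v i)" using veq by simp
    thus ?thesis using sw by (simp add: sum_subtractf)
  qed
  have totnn: "\<And>j. j \<in> V \<Longrightarrow> 0 \<le> v j - v j * (\<Sum>i\<in>V. P' j i)"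
  proof -
    fix j assume "j \<in> V"
    then have "v j * (\<Sum>i\<in>V. P' j i) \<le> v j" using rs' vnn by (intro mult_left_le) auto
    then show "0 \<le> v j - v j * (\<Sum>i\<in>V. P' j i)" by simp
  qed
  have rs1: "(\<Sum>i\<in>V. P' j i) = 1" if "j \<in> V" "0 < v j" for j
  proof -
    have "\<forall>j\<in>V. v j - v j * (\<Sum>i\<in>V. P' j i) = 0" using tot sum_nonneg_eq_0_iff[OF finV, of "\<lambda>j. v j - v j * (\<Sum>i\<in>V. P' j i)"] totnn by blast
    hence "v j - v j * (\<Sum>i\<in>V. P' j i) = 0" using that by blast
    hence "v j * (1 - (\<Sum>i\<in>V. P' j i)) = 0" by (simp add: algebra_simps)
    thus ?thesis using that by simp
  qed
  define W where "W = {i\<in>V. 0 < v i}"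
  have WV: "W \<subseteq> V" by (auto simp: W_def)
  have closed': "i \<in> W" if "j \<in> W" "i \<in> V" "P' j i > 0" for i j
  proof -
    have "v j * P' j i \<le> (\<Sum>j\<in>V. v j * P' j i)"
      by (rule member_le_sum) (use that WV P'nn vnn finV in auto)
    moreover have "0 < v j * P' j i" using that by (simp add: W_def)
    ultimately show ?thesis using veq that by (auto simp: W_def)
  qed
  show ?thesis
  proof (cases "W \<inter> L = {}")
    case True
    have "\<forall>i\<in>V. v i = (\<Sum>j\<in>V. v j * P j i)"
    proof
      fix i assume i: "i \<in> V"
      have "(\<Sum>j\<in>V. v j * P' j i) = (\<Sum>j\<in>V. v j * P j i)"
      proof (rule sum.cong)
        fix j assume j: "j \<in> V"
        show "v j * P' j i = v j * P j i"
        proof (cases "v j = 0")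
          case False
          then have "j \<in> W" using vnn[of j] j by (auto simp: W_def)
          then have "j \<notin> L" using True by auto
          then show ?thesis using same j by auto
        qed simp
      qed simp
      then show "v i = (\<Sum>j\<in>V. v j * P j i)" using veq i by simp
    qed
    moreover have "\<forall>i. i\<notin>V \<longrightarrow> v i = 0" using s0 by (simp add: v_def)
    ultimately have "\<forall>i. v i = 0" using uniq by blast
    then show ?thesis by (simp add: v_def)
  next
    case False
    then obtain l where lW: "l \<in> W" and lL: "l \<in> L" by auto
    have rsW: "(\<Sum>i\<in>V. P j i) = 1" if j: "j \<in> W" for j
    proof (cases "j \<in> L")
      case True then show ?thesis using rsL by auto
    next
      case False
      then have "(\<Sum>i\<in>V. P j i) = (\<Sum>i\<in>V. P' j i)" using same j WV by auto
      also have "\<dots> = 1" using rs1 j by (auto simp: W_def)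
      finally show ?thesis .
    qed
    have zeroOut: "P j i = 0" if "j \<in> W" "i \<in> V - W" for j i
    proof (rule ccontr)
      assume "P j i \<noteq> 0"
      then have "P j i > 0" using Pnn by (metis less_eq_real_def)
      then have "P' j i > 0" using supp same that WV by (cases "j \<in> L") auto
      then show False using closed' that by auto
    qed
    have inner: "(\<Sum>i\<in>W. P j i) = 1" if "j \<in> W" for j
    proof -
      have "(\<Sum>i\<in>V. P j i) = (\<Sum>i\<in>W. P j i) + (\<Sum>i\<in>V-W. P j i)"
        using sum.subset_diff[OF WV finV, of "P j"] by linarith
      moreover have "(\<Sum>i\<in>V-W. P j i) = 0" using zeroOut that by simp
      ultimately show ?thesis using rsW that by simp
    qed
    have finW: "finite W" using finV WV finite_subset by blast
    have "(\<Sum>i\<in>W. t i) = (\<Sum>i\<in>W. r i + (\<Sum>j\<in>V. t j * P j i))"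
      by (rule sum.cong) (use teq WV in auto)
    also have "\<dots> = (\<Sum>i\<in>W. r i) + (\<Sum>i\<in>W. \<Sum>j\<in>V. t j * P j i)"
      by (rule sum.distrib)
    also have "(\<Sum>i\<in>W. \<Sum>j\<in>V. t j * P j i) = (\<Sum>j\<in>V. t j * (\<Sum>i\<in>W. P j i))"
      by (subst sum.swap) (simp add: sum_distrib_left)
    also have "\<dots> = (\<Sum>j\<in>W. t j * (\<Sum>i\<in>W. P j i)) + (\<Sum>j\<in>V-W. t j * (\<Sum>i\<in>W. P j i))"
      using sum.subset_diff[OF WV finV, of "\<lambda>j. t j * (\<Sum>i\<in>W. P j i)"] by linarith
    also have "(\<Sum>j\<in>W. t j * (\<Sum>i\<in>W. P j i)) = (\<Sum>j\<in>W. t j)" using inner by simp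
    finally have eq0: "(\<Sum>i\<in>W. r i) + (\<Sum>j\<in>V-W. t j * (\<Sum>i\<in>W. P j i)) = 0" by simp
    have n1: "0 \<le> (\<Sum>i\<in>W. r i)" by (rule sum_nonneg) (use rnn WV in blast)
    have n2nn: "0 \<le> t j * (\<Sum>i\<in>W. P j i)" if j: "j \<in> V - W" for j
    proof -
      have "0 \<le> t j" using tnn j by blast
      moreover have "0 \<le> (\<Sum>i\<in>W. P j i)" by (rule sum_nonneg) (use Pnn in blast)
      ultimately show ?thesis by (rule mult_nonneg_nonneg)
    qed
    have n2: "0 \<le> (\<Sum>j\<in>V-W. t j * (\<Sum>i\<in>W. P j i))" by (rule sum_nonneg) (rule n2nn)
    have rW: "(\<Sum>i\<in>W. r i) = 0" using eq0 n1 n2 by linarith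
    have rnnW: "\<And>i. i \<in> W \<Longrightarrow> 0 \<le> r i" using rnn WV by blast
    have rW': "\<forall>i\<in>W. r i = 0" using rW sum_nonneg_eq_0_iff[OF finW rnnW] by simp
    have fVW: "finite (V - W)" using finV by simp
    have "(\<Sum>j\<in>V-W. t j * (\<Sum>i\<in>W. P j i)) = 0" using eq0 n1 n2 by linarith
    hence in0: "\<forall>j\<in>V-W. t j * (\<Sum>i\<in>W. P j i) = 0"
      using sum_nonneg_eq_0_iff[OF fVW n2nn] by simp
    have inflow: "t j * P j i = 0" if j: "j \<in> V - W" and i: "i \<in> W" for i j
    proof -
      have "t j = 0 \<or> (\<Sum>i\<in>W. P j i) = 0" using in0 j by simp
      then show ?thesis
      proof
        assume "(\<Sum>i\<in>W. P j i) = 0"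
        then have "\<forall>i\<in>W. P j i = 0" using sum_nonneg_eq_0_iff[OF finW, of "P j"] Pnn by simp
        then show ?thesis using i by simp
      qed simp
    qed
    define u where "u i = (if i \<in> W then t i else 0)" for i
    have "\<forall>i\<in>V. u i = (\<Sum>j\<in>V. u j * P j i)"
    proof
      fix i assume i: "i \<in> V"
      have "(\<Sum>j\<in>V. u j * P j i) = (\<Sum>j\<in>W. u j * P j i) + (\<Sum>j\<in>V-W. u j * P j i)"
        using sum.subset_diff[OF WV finV, of "\<lambda>j. u j * P j i"] by linarith
      also have "(\<Sum>j\<in>V-W. u j * P j i) = 0" by (simp add: u_def)
      also have "(\<Sum>j\<in>W. u j * P j i) = (\<Sum>j\<in>W. t j * P j i)" by (simp add: u_def)
      finally have e1: "(\<Sum>j\<in>V. u j * P j i) = (\<Sum>j\<in>W. t j * P j i)" by simp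
      show "u i = (\<Sum>j\<in>V. u j * P j i)"
      proof (cases "i \<in> W")
        case True
        have "t i = r i + (\<Sum>j\<in>V. t j * P j i)" using teq i by auto
        also have "(\<Sum>j\<in>V. t j * P j i) = (\<Sum>j\<in>W. t j * P j i) + (\<Sum>j\<in>V-W. t j * P j i)"
          using sum.subset_diff[OF WV finV, of "\<lambda>j. t j * P j i"] by linarith
        also have "(\<Sum>j\<in>V-W. t j * P j i) = 0" by (rule sum.neutral) (use inflow True in blast)
        finally show ?thesis using e1 rW' True by (simp add: u_def)
      next
        case False
        have "(\<Sum>j\<in>W. t j * P j i) = 0" using zeroOut False i by simp
        then show ?thesis using e1 False by (simp add: u_def)
      qed
    qed
    moreover have "\<forall>i. i\<notin>V \<longrightarrow> u i = 0" using WV by (auto simp: u_def)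
    ultimately have "\<forall>i. u i = 0" using uniq by blast
    hence "u l = 0" by blast
    hence "t l = 0" using lW by (simp add: u_def)
    then show ?thesis using tpos lL by auto
  qed
qed

lemma flow_nonneg:
  assumes net: "network V E C S r" and feas: "feasible V E C S r phi x" and k: "k \<in> C"
  shows "0 \<le> arrival V r phi j k * phi j i k"
proof (cases "j \<in> V")
  case True
  then show ?thesis using feas k by (auto simp: feasible_def)
next
  case False
  then have "(j, i) \<notin> E" using net by (auto simp: network_def)
  then have "phi j i k = 0" using feas k by (auto simp: feasible_def)
  then show ?thesis by simp
qed

lemma lf_nonneg:
  assumes net: "network V E C S r" and feas: "feasible V E C S r phi x"
  shows "0 \<le> link_flow V C r phi i j"
  unfolding link_flow_def by (rule sum_nonneg) (use flow_nonneg[OF net feas] in auto)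

theorem mainTheorem7:
  fixes V :: "'v set" and E :: "('v \<times> 'v) set" and C :: "'k set" and S :: "'k \<Rightarrow> 'v set"
    and r :: "'v \<Rightarrow> 'k \<Rightarrow> real"
    and D :: "'v \<Rightarrow> 'v \<Rightarrow> real \<Rightarrow> real" and B :: "'v \<Rightarrow> real \<Rightarrow> real"
    and phi :: "'v \<Rightarrow> 'v \<Rightarrow> 'k \<Rightarrow> real" and x :: "'v \<Rightarrow> 'k \<Rightarrow> real"
    and ls :: "'v list" and k :: 'k
  assumes net: "network V E C S r"
    and D_cost: "\<forall>(i, j)\<in>E. cost_function (D i j)"
    and B_cost: "\<forall>i\<in>V. cost_function (B i)"
    and D_strict: "\<forall>(i, j)\<in>E. strict_mono_on {0..} (D i j)"
    and feas: "feasible V E C S r phi x"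
    and bin: "binary_caching V C x"
    and kC: "k \<in> C"
    and len: "length ls \<ge> 2"
    and closed: "hd ls = last ls"
    and loop: "\<forall>p. p + 1 < length ls \<longrightarrow> phi (ls ! p) (ls ! (p + 1)) k > 0"
    and pos: "arrival V r phi (hd ls) k > 0"
  shows "\<exists>phi' x'. feasible V E C S r phi' x' \<and> binary_caching V C x' \<and>
           total_cost V E C r D B phi' x' < total_cost V E C r D B phi x"
proof -
  have finV: "finite V" and EV: "E \<subseteq> V \<times> V" and Esym: "\<forall>i j. (i, j) \<in> E \<longrightarrow> (j, i) \<in> E"
    and finC: "finite C" and rnn: "\<forall>i\<in>V. 0 \<le> r i k"
    using net kC by (auto simp: network_def)
  have F1: "\<forall>k\<in>C. \<forall>i j. 0 \<le> phi i j k \<and> phi i j k \<le> 1"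
    and F2: "\<forall>k\<in>C. \<forall>i j. (i, j) \<notin> E \<longrightarrow> phi i j k = 0"
    and F3: "\<forall>k\<in>C. \<forall>i\<in>V. 0 \<le> x i k \<and> x i k \<le> 1"
    and F4: "\<forall>k\<in>C. \<forall>i\<in>V. x i k + (\<Sum>j\<in>V. phi i j k) = (if i \<in> S k then 0 else 1)"
    and F5: "\<forall>k\<in>C. \<exists>!t. arrival_eq V r phi k t"
    and F6: "\<forall>k\<in>C. \<forall>i\<in>V. 0 \<le> arrival V r phi i k"
    using feas by (auto simp: feasible_def)
  have finE: "finite E" using EV finV finite_subset by (metis finite_SigmaI)
  have phinn: "\<And>i j. 0 \<le> phi i j k" using F1 kC by auto
  define t where "t i = arrival V r phi i k" for i
  have tTHE: "t = (THE t. arrival_eq V r phi k t)" by (rule ext) (simp add: t_def arrival_def)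
  have ex1: "\<exists>!t. arrival_eq V r phi k t" using F5 kC by auto
  have teqA: "arrival_eq V r phi k t" unfolding tTHE by (rule theI'[OF ex1])
  have teq: "\<forall>i\<in>V. t i = r i k + (\<Sum>j\<in>V. t j * phi j i k)" and t0: "\<forall>i. i \<notin> V \<longrightarrow> t i = 0"
    using teqA by (auto simp: arrival_eq_def)
  have tnn: "\<And>i. 0 \<le> t i"
    using F6 kC t0 by (metis order_refl t_def)
  define n where "n = length ls"
  have n2: "n \<ge> 2" using len by (simp add: n_def)
  have lsne: "ls \<noteq> []" using n2 n_def by auto
  have hd0: "hd ls = ls ! 0" using lsne by (simp add: hd_conv_nth)
  have last0: "ls ! (n - 1) = ls ! 0" using closed lsne hd0 by (simp add: n_def last_conv_nth)
  have phipos: "\<And>p. p < n - 1 \<Longrightarrow> 0 < phi (ls ! p) (ls ! (p + 1)) k"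
    using loop n_def by auto
  have edge: "\<And>p. p < n - 1 \<Longrightarrow> (ls ! p, ls ! (p + 1)) \<in> E"
    using phipos F2 kC by (metis less_irrefl)
  have lsV: "\<And>p. p < n - 1 \<Longrightarrow> ls ! p \<in> V \<and> ls ! (p + 1) \<in> V"
    using edge EV by blast
  have tpos_loop: "\<And>p. p < n \<Longrightarrow> 0 < t (ls ! p)"
  proof -
    fix p show "p < n \<Longrightarrow> 0 < t (ls ! p)"
    proof (induction p)
      case 0 then show ?case using pos hd0 by (simp add: t_def)
    next
      case (Suc p)
      then have p: "p < n - 1" by simp
      have IH: "0 < t (ls ! p)" using Suc by simp
      have V1: "ls ! (p + 1) \<in> V" and V0: "ls ! p \<in> V" using lsV p by auto
      have "t (ls ! p) * phi (ls ! p) (ls ! (p + 1)) k \<le> (\<Sum>j\<in>V. t j * phi j (ls ! (p + 1)) k)"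
        by (rule member_le_sum) (use V0 finV tnn phinn in auto)
      moreover have "0 < t (ls ! p) * phi (ls ! p) (ls ! (p + 1)) k" using IH phipos p by simp
      moreover have "t (ls ! (p + 1)) = r (ls ! (p + 1)) k + (\<Sum>j\<in>V. t j * phi j (ls ! (p + 1)) k)"
        using teq V1 by auto
      moreover have "0 \<le> r (ls ! (p + 1)) k" using rnn V1 by auto
      ultimately show ?case by simp
    qed
  qed
  have lnode: "(\<Sum>j\<in>V. phi (ls ! p) j k) = 1 \<and> x (ls ! p) k = 0 \<and> ls ! p \<notin> S k" if p: "p < n - 1" for p
  proof -
    let ?i = "ls ! p"
    have iV: "?i \<in> V" using lsV p by auto
    have "phi ?i (ls ! (p + 1)) k \<le> (\<Sum>j\<in>V. phi ?i j k)"
      by (rule member_le_sum) (use lsV p finV phinn in auto)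
    then have sp: "0 < (\<Sum>j\<in>V. phi ?i j k)" using phipos[OF p] by linarith
    have c: "x ?i k + (\<Sum>j\<in>V. phi ?i j k) = (if ?i \<in> S k then 0 else 1)" using F4 kC iV by auto
    have xb: "x ?i k = 0 \<or> x ?i k = 1" using bin kC iV by (auto simp: binary_caching_def)
    have x0: "0 \<le> x ?i k" using F3 kC iV by auto
    have nS: "?i \<notin> S k" using c sp x0 by (auto split: if_splits)
    then show ?thesis using c xb sp by auto
  qed
  define c where "c i j = (\<Sum>p<n-1. if ls ! p = i \<and> ls ! (p + 1) = j then 1 else 0 :: real)" for i j
  define co where "co i = (\<Sum>p<n-1. if ls ! p = i then 1 else 0 :: real)" for i
  have cnn: "\<And>i j. 0 \<le> c i j" by (simp add: c_def sum_nonneg)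
  have conn: "\<And>i. 0 \<le> co i" by (simp add: co_def sum_nonneg)
  have c_le_co: "\<And>i j. c i j \<le> co i" unfolding c_def co_def by (rule sum_mono) auto
  have c_le: "\<And>i j. c i j \<le> real n - 1"
  proof -
    fix i j
    have "c i j \<le> of_nat (card {..<n-1}) * 1" unfolding c_def by (rule sum_bounded_above) auto
    then show "c i j \<le> real n - 1" using n2 by (simp add: of_nat_diff)
  qed
  have c_pos: "\<exists>p<n-1. ls ! p = i \<and> ls ! (p + 1) = j" if "0 < c i j" for i j
  proof (rule ccontr)
    assume "\<not> ?thesis"
    then have "c i j = 0" unfolding c_def by (intro sum.neutral) auto
    then show False using that by simp
  qed
  have co_pos: "\<exists>p<n-1. ls ! p = i" if "0 < co i" for i
  proof (rule ccontr)
    assume "\<not> ?thesis"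
    then have "co i = 0" unfolding co_def by (intro sum.neutral) auto
    then show False using that by simp
  qed
  have c_edge: "1 \<le> c (ls ! p) (ls ! (p + 1))" if p: "p < n - 1" for p
  proof -
    have "(if ls ! p = ls ! p \<and> ls ! (p + 1) = ls ! (p + 1) then 1 else 0 :: real)
       \<le> c (ls ! p) (ls ! (p + 1))"
      unfolding c_def by (rule member_le_sum) (use p in auto)
    then show ?thesis by simp
  qed
  have c_out: "(\<Sum>j\<in>V. c i j) = co i" for i
  proof -
    have "(\<Sum>j\<in>V. c i j) = (\<Sum>p<n-1. \<Sum>j\<in>V. if ls ! p = i \<and> ls ! (p + 1) = j then 1 else 0 :: real)"
      unfolding c_def by (rule sum.swap)
    also have "\<dots> = (\<Sum>p<n-1. if ls ! p = i then 1 else 0 :: real)"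
    proof (rule sum.cong)
      fix p assume "p \<in> {..<n-1}"
      then have V1: "ls ! (p + 1) \<in> V" using lsV by auto
      have "(\<Sum>j\<in>V. if ls ! p = i \<and> ls ! (p + 1) = j then 1 else 0 :: real)
          = (\<Sum>j\<in>V. if ls ! (p + 1) = j then (if ls ! p = i then 1 else 0) else 0 :: real)"
        by (rule sum.cong) auto
      also have "\<dots> = (if ls ! p = i then 1 else 0)" using V1 finV by (simp add: sum.delta)
      finally show "(\<Sum>j\<in>V. if ls ! p = i \<and> ls ! (p + 1) = j then 1 else 0 :: real) = (if ls ! p = i then 1 else 0)" .
    qed simp
    finally show ?thesis by (simp add: co_def)
  qed
  have c_in: "(\<Sum>j\<in>V. c j i) = co i" for i
  proof -
    define g where "g p = (if ls ! p = i then 1 else 0 :: real)" for p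
    have "(\<Sum>j\<in>V. c j i) = (\<Sum>p<n-1. \<Sum>j\<in>V. if ls ! p = j \<and> ls ! (p + 1) = i then 1 else 0 :: real)"
      unfolding c_def by (rule sum.swap)
    also have "\<dots> = (\<Sum>p<n-1. g (Suc p))"
    proof (rule sum.cong)
      fix p assume "p \<in> {..<n-1}"
      then have V0: "ls ! p \<in> V" using lsV by auto
      have "(\<Sum>j\<in>V. if ls ! p = j \<and> ls ! (p + 1) = i then 1 else 0 :: real)
          = (\<Sum>j\<in>V. if ls ! p = j then (if ls ! (p + 1) = i then 1 else 0) else 0 :: real)"
        by (rule sum.cong) auto
      also have "\<dots> = (if ls ! (p + 1) = i then 1 else 0)" using V0 finV by (simp add: sum.delta)
      finally show "(\<Sum>j\<in>V. if ls ! p = j \<and> ls ! (p + 1) = i then 1 else 0 :: real) = g (Suc p)"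
        by (simp add: g_def)
    qed simp
    also have "\<dots> = (\<Sum>p<n-1. g p)"
    proof -
      have "(\<Sum>p<n-1. g (Suc p) - g p) = g (n - 1) - g 0" by (rule sum_lessThan_telescope)
      also have "\<dots> = 0" using last0 by (simp add: g_def)
      finally show ?thesis by (simp add: sum_subtractf)
    qed
    finally show ?thesis by (simp add: co_def g_def)
  qed
  have co_V: "\<And>i. i \<notin> V \<Longrightarrow> co i = 0"
    using co_pos conn lsV by (metis less_eq_real_def)
  have co_loop: "(\<Sum>j\<in>V. phi i j k) = 1 \<and> x i k = 0 \<and> i \<notin> S k \<and> 0 < t i \<and> i \<in> V" if "0 < co i" for i
    using co_pos[OF that] lnode tpos_loop lsV by fastforce
  have c_E: "c i j = 0" if "(i, j) \<notin> E" for i j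
    using c_pos edge that cnn by (metis less_eq_real_def)
  define mu where "mu = Min ((\<lambda>p. t (ls ! p) * phi (ls ! p) (ls ! (p + 1)) k) ` {..<n-1})"
  have nne: "{..<n-1} \<noteq> {}" proof - have "0 \<in> {..<n-1}" using n2 by simp then show ?thesis by blast qed
  have mu_pos: "0 < mu"
    unfolding mu_def using nne tpos_loop phipos by (subst Min_gr_iff) auto
  have mu_le: "mu \<le> t (ls ! p) * phi (ls ! p) (ls ! (p + 1)) k" if "p < n - 1" for p
    unfolding mu_def by (rule Min_le) (use that in auto)
  define eps where "eps = mu / real n"
  have eps_pos: "0 < eps" using mu_pos n2 by (simp add: eps_def)
  have Npos: "0 < t i * phi i j k - eps * c i j" if cp: "0 < c i j" for i j
  proof -
    obtain p where p: "p < n - 1" "ls ! p = i" "ls ! (p + 1) = j" using c_pos[OF cp] by auto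
    have "eps * c i j \<le> eps * (real n - 1)" using c_le eps_pos by (simp add: mult_left_mono)
    also have "\<dots> = mu - mu / real n" using n2 by (simp add: eps_def field_simps)
    also have "\<dots> < mu" using mu_pos n2 by simp
    also have "\<dots> \<le> t i * phi i j k" using mu_le[OF p(1)] p by simp
    finally show ?thesis by simp
  qed
  have Nnn: "0 \<le> t i * phi i j k - eps * c i j" for i j
  proof (cases "0 < c i j")
    case True then show ?thesis using Npos[of i j] by simp
  next
    case False then have "c i j = 0" using cnn[of i j] by simp
    then show ?thesis using tnn phinn by simp
  qed
  have NE: "t i * phi i j k - eps * c i j = 0" if "(i, j) \<notin> E" for i j
    using c_E[OF that] F2 kC that by simp
  define t' where "t' i = t i - eps * co i" for i
  have t'_loop: "t' i = (\<Sum>j\<in>V. t i * phi i j k - eps * c i j)" if "0 < co i" for i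
  proof -
    have "(\<Sum>j\<in>V. t i * phi i j k - eps * c i j) = t i * (\<Sum>j\<in>V. phi i j k) - eps * (\<Sum>j\<in>V. c i j)"
      by (simp add: sum_subtractf sum_distrib_left)
    then show ?thesis using co_loop[OF that] c_out by (simp add: t'_def)
  qed
  have t'_pos: "0 < t' i" if co: "0 < co i" for i
  proof -
    obtain p where p: "p < n - 1" "ls ! p = i" using co_pos[OF co] by auto
    have "0 < (\<Sum>j\<in>V. t i * phi i j k - eps * c i j)"
    proof (rule sum_pos2[OF finV])
      show "ls ! (p + 1) \<in> V" using lsV p by auto
      show "0 < t i * phi i (ls ! (p + 1)) k - eps * c i (ls ! (p + 1))"
        using Npos c_edge[OF p(1)] p by simp
    qed (use Nnn in auto)
    then show ?thesis using t'_loop[OF co] by simp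
  qed
  have t'nn: "0 \<le> t' i" for i
  proof (cases "0 < co i")
    case True then show ?thesis using t'_pos[of i] by simp
  next
    case False then have "co i = 0" using conn[of i] by simp
    then show ?thesis using tnn by (simp add: t'_def)
  qed
  define phi' where "phi' i j k' = (if k' = k \<and> 0 < co i then (t i * phi i j k - eps * c i j) / t' i else phi i j k')" for i j k'
  have key: "t' i * phi' i j k = t i * phi i j k - eps * c i j" for i j
  proof (cases "0 < co i")
    case True then show ?thesis using t'_pos[OF True] by (simp add: phi'_def)
  next
    case False then have "co i = 0" using conn[of i] by simp
    moreover then have "c i j = 0" using c_le_co[of i j] cnn[of i j] by simp
    ultimately show ?thesis using False by (simp add: phi'_def t'_def)
  qed
  have phi'_other: "\<And>i j k'. k' \<noteq> k \<Longrightarrow> phi' i j k' = phi i j k'" by (simp add: phi'_def)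
  have G1: "\<forall>k'\<in>C. \<forall>i j. 0 \<le> phi' i j k' \<and> phi' i j k' \<le> 1"
  proof (intro ballI allI)
    fix k' i j assume k': "k' \<in> C"
    show "0 \<le> phi' i j k' \<and> phi' i j k' \<le> 1"
    proof (cases "k' = k \<and> 0 < co i")
      case False then show ?thesis using F1 k' by (auto simp: phi'_def)
    next
      case True
      have tp: "0 < t' i" using t'_pos True by simp
      have coi: "0 < co i" using True by simp
      have le: "t i * phi i j k - eps * c i j \<le> t' i"
      proof (cases "j \<in> V")
        case True
        show ?thesis unfolding t'_loop[OF coi]
          by (rule member_le_sum) (use True finV Nnn in auto)
      next
        case False
        then have "(i, j) \<notin> E" using EV by auto
        then show ?thesis using NE tp by simp
      qed
      show ?thesis using True tp le Nnn[of i j] by (simp add: phi'_def)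
    qed
  qed
  have G2: "\<forall>k'\<in>C. \<forall>i j. (i, j) \<notin> E \<longrightarrow> phi' i j k' = 0"
    using F2 NE by (auto simp: phi'_def)
  have G4: "\<forall>k'\<in>C. \<forall>i\<in>V. x i k' + (\<Sum>j\<in>V. phi' i j k') = (if i \<in> S k' then 0 else 1)"
  proof (intro ballI)
    fix k' i assume k': "k' \<in> C" and i: "i \<in> V"
    show "x i k' + (\<Sum>j\<in>V. phi' i j k') = (if i \<in> S k' then 0 else 1)"
    proof (cases "k' = k \<and> 0 < co i")
      case False then show ?thesis using F4 k' i by (auto simp: phi'_def)
    next
      case True
      have tp: "0 < t' i" using t'_pos True by simp
      have "(\<Sum>j\<in>V. phi' i j k') = (\<Sum>j\<in>V. t i * phi i j k - eps * c i j) / t' i"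
        using True by (simp add: phi'_def sum_divide_distrib)
      also have "\<dots> = 1" using t'_loop True tp by simp
      finally show ?thesis using co_loop True by simp
    qed
  qed
  have rs': "\<forall>j\<in>V. (\<Sum>i\<in>V. phi' j i k) \<le> 1"
  proof
    fix j assume j: "j \<in> V"
    have "x j k + (\<Sum>i\<in>V. phi' j i k) = (if j \<in> S k then 0 else 1)" using G4 kC j by auto
    moreover have "0 \<le> x j k" using F3 kC j by auto
    ultimately show "(\<Sum>i\<in>V. phi' j i k) \<le> 1" by (auto split: if_splits)
  qed
  have t'eq: "arrival_eq V r phi' k t'"
    unfolding arrival_eq_def
  proof (intro conjI allI impI ballI)
    fix i assume "i \<notin> V" then show "t' i = 0" using t0 co_V by (simp add: t'_def)
  next
    fix i assume i: "i \<in> V"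
    have "(\<Sum>j\<in>V. t' j * phi' j i k) = (\<Sum>j\<in>V. t j * phi j i k - eps * c j i)"
      using key by simp
    also have "\<dots> = (\<Sum>j\<in>V. t j * phi j i k) - eps * co i"
      by (simp add: sum_subtractf sum_distrib_left[symmetric] c_in)
    finally show "t' i = r i k + (\<Sum>j\<in>V. t' j * phi' j i k)" using teq i by (simp add: t'_def)
  qed
  have uniq: "\<forall>u. (\<forall>i. i\<notin>V \<longrightarrow> u i = 0) \<and> (\<forall>i\<in>V. u i = (\<Sum>j\<in>V. u j * phi j i k)) \<longrightarrow> (\<forall>i. u i = 0)"
  proof (intro allI impI)
    fix u i assume u: "(\<forall>i. i\<notin>V \<longrightarrow> u i = 0) \<and> (\<forall>i\<in>V. u i = (\<Sum>j\<in>V. u j * phi j i k))"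
    have "arrival_eq V r phi k (\<lambda>i. t i + u i)"
      using u teq t0 by (auto simp: arrival_eq_def distrib_right sum.distrib)
    then have "(\<lambda>i. t i + u i) = t" using ex1 teqA by blast
    then show "u i = 0" by (metis add_cancel_left_right)
  qed
  have ex1': "\<exists>!t. arrival_eq V r phi' k t"
  proof (rule ex1I[of _ t'])
    show "arrival_eq V r phi' k t'" by (rule t'eq)
  next
    fix t2 assume t2: "arrival_eq V r phi' k t2"
    define s where "s i = t2 i - t' i" for i
    have s0: "\<forall>i. i \<notin> V \<longrightarrow> s i = 0" using t2 t'eq by (simp add: arrival_eq_def s_def)
    have seq: "\<forall>i\<in>V. s i = (\<Sum>j\<in>V. s j * phi' j i k)"
    proof
      fix i assume i: "i \<in> V"
      have a: "t2 i = r i k + (\<Sum>j\<in>V. t2 j * phi' j i k)" using t2 i unfolding arrival_eq_def by blast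
      have b: "t' i = r i k + (\<Sum>j\<in>V. t' j * phi' j i k)" using t'eq i unfolding arrival_eq_def by blast
      have "(\<Sum>j\<in>V. s j * phi' j i k) = (\<Sum>j\<in>V. t2 j * phi' j i k) - (\<Sum>j\<in>V. t' j * phi' j i k)"
        by (simp add: s_def left_diff_distrib sum_subtractf)
      then show "s i = (\<Sum>j\<in>V. s j * phi' j i k)" using a b by (simp add: s_def)
    qed
    have "s i = 0" for i
    proof (rule homog_transfer[of V "{i\<in>V. 0 < co i}" "\<lambda>j i. phi' j i k" "\<lambda>j i. phi j i k" t "\<lambda>i. r i k" s i])
      show "finite V" by (rule finV)
      show "{i \<in> V. 0 < co i} \<subseteq> V" by auto
      show "\<forall>i j. 0 \<le> phi' j i k" using G1 kC by auto
      show "\<forall>i j. 0 \<le> phi j i k" using phinn by auto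
      show "\<forall>j\<in>V. (\<Sum>i\<in>V. phi' j i k) \<le> 1" by (rule rs')
      show "\<forall>j\<in>V - {i \<in> V. 0 < co i}. \<forall>i. phi' j i k = phi j i k" by (auto simp: phi'_def)
      show "\<forall>j\<in>{i \<in> V. 0 < co i}. (\<Sum>i\<in>V. phi j i k) = 1" using co_loop by auto
      show "\<forall>j\<in>{i \<in> V. 0 < co i}. \<forall>i. 0 < phi j i k \<longrightarrow> 0 < phi' j i k"
      proof (intro ballI allI impI)
        fix j i assume j: "j \<in> {i \<in> V. 0 < co i}" and ph: "0 < phi j i k"
        have tp: "0 < t' j" using t'_pos j by auto
        have "0 < t j * phi j i k - eps * c j i"
        proof (cases "0 < c j i")
          case True then show ?thesis using Npos by simp
        next
          case False then have "c j i = 0" using cnn[of j i] by simp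
          then show ?thesis using co_loop j ph by simp
        qed
        then show "0 < phi' j i k" using j tp by (simp add: phi'_def)
      qed
      show "\<forall>u. (\<forall>i. i \<notin> V \<longrightarrow> u i = 0) \<and> (\<forall>i\<in>V. u i = (\<Sum>j\<in>V. u j * phi j i k)) \<longrightarrow> (\<forall>i. u i = 0)"
        by (rule uniq)
      show "\<forall>i\<in>V. t i = r i k + (\<Sum>j\<in>V. t j * phi j i k)" by (rule teq)
      show "\<forall>i\<in>V. 0 \<le> r i k" by (rule rnn)
      show "\<forall>i\<in>V. 0 \<le> t i" using tnn by auto
      show "\<forall>l\<in>{i \<in> V. 0 < co i}. 0 < t l" using co_loop by auto
      show "\<forall>i. i \<notin> V \<longrightarrow> s i = 0" by (rule s0)
      show "\<forall>i\<in>V. s i = (\<Sum>j\<in>V. s j * phi' j i k)" by (rule seq)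
    qed
    then show "t2 = t'" by (auto simp: s_def)
  qed
  have arr'k: "arrival V r phi' i k = t' i" for i
  proof -
    have "(THE t. arrival_eq V r phi' k t) = t'" by (rule the1_equality) (rule ex1', rule t'eq)
    then show ?thesis by (simp add: arrival_def)
  qed
  have aeq_other: "arrival_eq V r phi' k' = arrival_eq V r phi k'" if "k' \<noteq> k" for k'
    using that by (intro ext) (simp add: arrival_eq_def phi'_other)
  have arr_other: "arrival V r phi' i k' = arrival V r phi i k'" if "k' \<noteq> k" for i k'
    using aeq_other[OF that] by (simp add: arrival_def)
  have feas': "feasible V E C S r phi' x"
    unfolding feasible_def
  proof (intro conjI)
    show "\<forall>k\<in>C. \<forall>i j. 0 \<le> phi' i j k \<and> phi' i j k \<le> 1" by (rule G1)
    show "\<forall>k\<in>C. \<forall>i j. (i, j) \<notin> E \<longrightarrow> phi' i j k = 0" by (rule G2)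
    show "\<forall>k\<in>C. \<forall>i\<in>V. 0 \<le> x i k \<and> x i k \<le> 1" by (rule F3)
    show "\<forall>k\<in>C. \<forall>i\<in>V. x i k + (\<Sum>j\<in>V. phi' i j k) = (if i \<in> S k then 0 else 1)" by (rule G4)
    show "\<forall>k'\<in>C. \<exists>!t. arrival_eq V r phi' k' t"
      using ex1' aeq_other F5 by metis
    show "\<forall>k'\<in>C. \<forall>i\<in>V. 0 \<le> arrival V r phi' i k'"
      using arr'k t'nn arr_other F6 by metis
  qed
  have lf': "link_flow V C r phi' i j = link_flow V C r phi i j - eps * c j i" for i j
  proof -
    have "link_flow V C r phi' i j = (\<Sum>k'\<in>C. arrival V r phi j k' * phi j i k' - (if k' = k then eps * c j i else 0))"
      unfolding link_flow_def
    proof (rule sum.cong)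
      fix k' assume "k' \<in> C"
      show "arrival V r phi' j k' * phi' j i k' = arrival V r phi j k' * phi j i k' - (if k' = k then eps * c j i else 0)"
      proof (cases "k' = k")
        case True then show ?thesis using key arr'k by (simp add: t_def)
      next
        case False then show ?thesis using arr_other phi'_other by simp
      qed
    qed simp
    also have "\<dots> = link_flow V C r phi i j - eps * c j i"
      using finC kC by (simp add: sum_subtractf link_flow_def)
    finally show ?thesis .
  qed
  define i0 where "i0 = ls ! 1"
  define j0 where "j0 = ls ! 0"
  have p0: "0 < n - 1" using n2 by simp
  have e0: "(i0, j0) \<in> E" using edge[OF p0] Esym by (simp add: i0_def j0_def)
  have c0: "1 \<le> c j0 i0" using c_edge[OF p0] by (simp add: i0_def j0_def)
  have Dsum: "(\<Sum>(i, j)\<in>E. D i j (link_flow V C r phi' i j)) < (\<Sum>(i, j)\<in>E. D i j (link_flow V C r phi i j))"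
  proof (rule sum_strict_mono_ex1[OF finE])
    show "\<forall>e\<in>E. (case e of (i, j) \<Rightarrow> D i j (link_flow V C r phi' i j)) \<le> (case e of (i, j) \<Rightarrow> D i j (link_flow V C r phi i j))"
    proof (intro ballI)
      fix e assume e: "e \<in> E"
      obtain i j where ij: "e = (i, j)" by (cases e)
      have sm: "strict_mono_on {0..} (D i j)" using D_strict e ij by auto
      have a: "0 \<le> link_flow V C r phi' i j" by (rule lf_nonneg[OF net feas'])
      have b: "0 \<le> link_flow V C r phi i j" by (rule lf_nonneg[OF net feas])
      have le: "link_flow V C r phi' i j \<le> link_flow V C r phi i j" using lf' eps_pos cnn by simp
      show "(case e of (i, j) \<Rightarrow> D i j (link_flow V C r phi' i j)) \<le> (case e of (i, j) \<Rightarrow> D i j (link_flow V C r phi i j))"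
      proof (cases "link_flow V C r phi' i j = link_flow V C r phi i j")
        case True then show ?thesis using ij by simp
      next
        case False then have "link_flow V C r phi' i j < link_flow V C r phi i j" using le by simp
        then show ?thesis using strict_mono_onD[OF sm] a b ij by fastforce
      qed
    qed
    show "\<exists>e\<in>E. (case e of (i, j) \<Rightarrow> D i j (link_flow V C r phi' i j)) < (case e of (i, j) \<Rightarrow> D i j (link_flow V C r phi i j))"
    proof (rule bexI[OF _ e0])
      have sm: "strict_mono_on {0..} (D i0 j0)" using D_strict e0 by auto
      have a: "0 \<le> link_flow V C r phi' i0 j0" by (rule lf_nonneg[OF net feas'])
      have b: "0 \<le> link_flow V C r phi i0 j0" by (rule lf_nonneg[OF net feas])
      have "link_flow V C r phi' i0 j0 < link_flow V C r phi i0 j0" using lf' eps_pos c0 by simp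
      then show "(case (i0, j0) of (i, j) \<Rightarrow> D i j (link_flow V C r phi' i j)) < (case (i0, j0) of (i, j) \<Rightarrow> D i j (link_flow V C r phi i j))"
        using strict_mono_onD[OF sm] a b by fastforce
    qed
  qed
  have "total_cost V E C r D B phi' x < total_cost V E C r D B phi x"
    using Dsum by (simp add: total_cost_def)
  then show ?thesis using feas' bin by blast
qed

end
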